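(* Let $\lambda\in\mathbb{C}$ and $n,k\in\mathbb{N}_0$. Then $$\int_{0}^{1}y_{3}(n,k;\lambda;1,x)\,dx=\frac{1}{n+1}\sum_{m=0}^{n}k^{m}\,y_{1}(n-m,k;\lambda),$$ or equivalently $$\int_{0}^{1}y_{3}(n,k;\lambda;1,x)\,dx=\frac{1}{(n+1)k!}\sum_{j=0}^{k}\binom{k}{j}\lambda^{j}\sum_{m=0}^{n}k^{m}j^{n-m}.$$
   Context: For $a,b\in\mathbb{R}$, $\lambda\in\mathbb{C}$ and $k\in\mathbb{N}_0$: the numbers $y_3(n,k;\lambda;a,b)$ are defined by $\frac{e^{bkt}}{k!}(\lambda e^{(a-b)t}+1)^{k}=\sum_{n\ge0}y_{3}(n,k;\lambda;a,b)\frac{t^{n}}{n!}$ (so $y_3(n,k;\lambda;1,x)$ is a polynomial in $x$), and the numbers $y_1(n,k;\lambda)$ by $\frac{1}{k!}(\lambda e^{t}+1)^{k}=\sum_{n\ge0}y_{1}(n,k;\lambda)\frac{t^{n}}{n!}$. Convention: $0^0=1$. *)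

theory Defs
  imports "HOL-Analysis.Analysis" "HOL-Computational_Algebra.Formal_Power_Series"
begin

definition y3 :: "nat \<Rightarrow> nat \<Rightarrow> complex \<Rightarrow> real \<Rightarrow> real \<Rightarrow> complex" where
  "y3 n k lam a b = fact n * fps_nth
     (fps_const (1 / fact k) * fps_exp (complex_of_real (b * real k))
        * (fps_const lam * fps_exp (complex_of_real (a - b)) + 1) ^ k) n"

definition y1 :: "nat \<Rightarrow> nat \<Rightarrow> complex \<Rightarrow> complex" where
  "y1 n k lam = fact n * fps_nth
     (fps_const (1 / fact k) * (fps_const lam * fps_exp 1 + 1) ^ k) n"

end

theory Submission
  imports Defs
begin

lemma fps_expand:
  fixes c a b :: complex
  shows "fps_exp b * (fps_const c * fps_exp a + 1)^k
    = (\<Sum>j\<le>k. fps_const (of_nat (k choose j) * c^j) * fps_exp (b + of_nat j * a))"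
proof -
  have "(fps_const c * fps_exp a + 1)^k = (\<Sum>j\<le>k. of_nat (k choose j) * (fps_const c * fps_exp a)^j * 1^(k-j))"
    by (rule binomial_ring)
  also have "\<dots> = (\<Sum>j\<le>k. fps_const (of_nat (k choose j) * c^j) * fps_exp (of_nat j * a))"
    by (intro sum.cong refl) (simp add: power_mult_distrib fps_const_power fps_exp_power_mult fps_of_nat[symmetric] mult.assoc)
  finally show ?thesis
    by (simp add: sum_distrib_left fps_exp_add_mult algebra_simps)
qed

lemma y3_eq: "y3 n k lam 1 x = (1 / fact k) * (\<Sum>j\<le>k. of_nat (k choose j) * lam^j *
   complex_of_real ((real j + x * (real k - real j))^n))"
proof -
  have "y3 n k lam 1 x = fact n * ((1/fact k) * (\<Sum>j\<le>k. (of_nat (k choose j) * lam^j) *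
     (complex_of_real (x * real k) + of_nat j * complex_of_real (1 - x))^n / fact n))"
    unfolding y3_def by (simp add: mult.assoc fps_expand fps_sum_nth)
  also have "\<dots> = (1 / fact k) * (\<Sum>j\<le>k. of_nat (k choose j) * lam^j *
   complex_of_real ((real j + x * (real k - real j))^n))"
    by (simp add: sum_distrib_left algebra_simps)
  finally show ?thesis .
qed

lemma y1_eq: "y1 n k lam = (1 / fact k) * (\<Sum>j\<le>k. of_nat (k choose j) * lam^j * of_nat j ^ n)"
proof -
  have "y1 n k lam = fact n * ((1/fact k) * (\<Sum>j\<le>k. (of_nat (k choose j) * lam^j) *
     (0 + of_nat j * 1)^n / fact n))"
    unfolding y1_def using fps_expand[of 0 lam 1 k] by (simp add: mult.assoc fps_sum_nth)
  then show ?thesis by (simp add: sum_distrib_left algebra_simps)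
qed

lemma int_real: "((\<lambda>x::real. (real j + x * (real k - real j))^n) has_integral
   (\<Sum>m=0..n. real k ^ m * real j ^ (n - m)) / real (n+1)) {0..1}"
proof (cases "j = k")
  case True
  have "(\<Sum>m=0..n. real k ^ m * real k ^ (n - m)) = (\<Sum>m=0..n. real k ^ n)"
    by (intro sum.cong refl) (simp add: power_add[symmetric])
  then show ?thesis using True has_integral_const_real[of "real k ^ n" 0 1] by simp
next
  case False
  define d where "d = real k - real j"
  have d: "d \<noteq> 0" using False by (simp add: d_def)
  define F where "F x = 1 / (real (Suc n) * d) * (real j + x * d)^(Suc n)" for x
  have "(F has_real_derivative (real j + x * d)^n) (at x within {0..1})" for x
  proof -
    have "((\<lambda>x. (real j + x*d)^Suc n) has_real_derivative (real (Suc n) * (real j + x*d)^n * d)) (at x within {0..1})"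
    proof -
      have "((\<lambda>x. real j + x*d) has_real_derivative d) (at x within {0..1})"
        by (auto intro!: derivative_eq_intros)
      from DERIV_power[OF this, of "Suc n"] show ?thesis by (simp only: diff_Suc_1 diff_Suc_Suc minus_nat.diff_0 mult.assoc mult.commute[of d])
    qed
    from DERIV_cmult[OF this, of "1 / (real (Suc n) * d)"]
    have "(F has_real_derivative 1 / (real (Suc n) * d) * (real (Suc n) * (real j + x * d) ^ n * d)) (at x within {0..1})"
      unfolding F_def .
    moreover have "1 / (real (Suc n) * d) * (real (Suc n) * (real j + x * d) ^ n * d) = (real j + x * d) ^ n"
      using d by (simp del: of_nat_Suc)
    ultimately show ?thesis by simp
  qed
  then have "((\<lambda>x. (real j + x * d)^n) has_integral (F 1 - F 0)) {0..1}"
    by (intro fundamental_theorem_of_calculus) (auto simp: has_real_derivative_iff_has_vector_derivative[symmetric])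
  moreover have "F 1 - F 0 = (\<Sum>m=0..n. real k ^ m * real j ^ (n - m)) / real (n+1)"
  proof -
    define S where "S = (\<Sum>m=0..n. real k ^ m * real j ^ (n - m))"
    have "real k ^ Suc n - real j ^ Suc n = d * (\<Sum>i<Suc n. real j^(Suc n - Suc i) * real k^i)"
      unfolding d_def by (rule power_diff_sumr2)
    moreover have "(\<Sum>i<Suc n. real j^(Suc n - Suc i) * real k^i) = S"
      unfolding S_def by (intro sum.cong) (auto simp: atLeast0AtMost lessThan_Suc_atMost)
    ultimately have e: "real k ^ Suc n - real j ^ Suc n = d * S" by simp
    have "F 1 - F 0 = 1 / (real (Suc n) * d) * (real k ^ Suc n - real j ^ Suc n)"
      unfolding F_def d_def by (simp add: right_diff_distrib)
    also have "\<dots> = S / real (n+1)" using d by (simp only: e) (simp del: of_nat_Suc)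
    finally show ?thesis unfolding S_def .
  qed
  ultimately show ?thesis by (simp add: d_def)
qed
theorem mainTheorem5:
  fixes lam :: complex and n k :: nat
  shows "integral {0..1} (\<lambda>x::real. y3 n k lam 1 x)
           = (1 / of_nat (n + 1)) * (\<Sum>m=0..n. of_nat k ^ m * y1 (n - m) k lam)
       \<and> integral {0..1} (\<lambda>x::real. y3 n k lam 1 x)
           = (1 / (of_nat (n + 1) * fact k)) *
             (\<Sum>j=0..k. of_nat (k choose j) * lam ^ j *
                 (\<Sum>m=0..n. of_nat k ^ m * of_nat j ^ (n - m)))"
proof -
  define S where "S j = (\<Sum>m=0..n. real k ^ m * real j ^ (n - m))" for j
  have f: "(\<lambda>x::real. y3 n k lam 1 x) = (\<lambda>x. (1 / fact k) * (\<Sum>j\<le>k. of_nat (k choose j) * lam^j *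
      complex_of_real ((real j + x * (real k - real j))^n)))"
    by (rule ext, rule y3_eq)
  have "((\<lambda>x::real. y3 n k lam 1 x) has_integral
      (1 / fact k) * (\<Sum>j\<le>k. of_nat (k choose j) * lam^j * complex_of_real (S j / real (n+1)))) {0..1}"
    unfolding f S_def
    by (intro has_integral_mult_right has_integral_sum finite_atMost has_integral_of_real int_real)
  then have I: "integral {0..1} (\<lambda>x::real. y3 n k lam 1 x) =
      (1 / fact k) * (\<Sum>j\<le>k. of_nat (k choose j) * lam^j * complex_of_real (S j / real (n+1)))"
    by (rule integral_unique)
  have B: "integral {0..1} (\<lambda>x::real. y3 n k lam 1 x)
           = (1 / (of_nat (n + 1) * fact k)) *
             (\<Sum>j=0..k. of_nat (k choose j) * lam ^ j *
                 (\<Sum>m=0..n. of_nat k ^ m * of_nat j ^ (n - m)))"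
    unfolding I S_def
    by (simp add: atLeast0AtMost sum_distrib_left sum_divide_distrib field_simps)
  have A: "(1 / of_nat (n + 1)) * (\<Sum>m=0..n. of_nat k ^ m * y1 (n - m) k lam) =
      (1 / (of_nat (n + 1) * fact k)) *
             (\<Sum>j=0..k. of_nat (k choose j) * lam ^ j *
                 (\<Sum>m=0..n. of_nat k ^ m * of_nat j ^ (n - m)))"
    unfolding y1_eq
    apply (simp add: atLeast0AtMost sum_distrib_left sum_divide_distrib)
    apply (subst sum.swap)
    apply (intro sum.cong refl)
    by (simp add: field_simps)
  show ?thesis using A B by simp
qed
end
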